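(* Let $k$ be a difference field of characteristic $0$ and $R=k\{y_1,\ldots,y_n\}$ the difference polynomial ring over $k$. Let $S\subseteq \mathbb{N}[x]^n$ and let $I=\langle \mathbf{y}^{\mathbf{u}}:\mathbf{u}\in S\rangle$ be the well-mixed closure of the set of monomials $\{\mathbf{y}^{\mathbf{u}}:\mathbf{u}\in S\}$. Then $I$ is generated by a finite set of monomials as a well-mixed $\sigma$-ideal, i.e. there is a finite set $F$ of monomials of $R$ with $I=\langle F\rangle$.
   Context: A difference field (σ-field) is a field $k$ with a ring endomorphism $\sigma:k\to k$. The difference polynomial ring $R=k\{y_1,\ldots,y_n\}$ is the polynomial ring over $k$ in the infinitely many variables $\sigma^j(y_i)$ ($1\le i\le n$, $j\ge 0$), with $\sigma$ extended by $\sigma(\sigma^j(y_i))=\sigma^{j+1}(y_i)$. Symbolic exponents: for $p=\sum_{i=0}^s c_ix^i\in\mathbb{N}[x]$ and $a\in R$, $a^p=\prod_{i=0}^s(\sigma^i(a))^{c_i}$. For $\mathbf{u}=(u_1,\ldots,u_n)\in\mathbb{N}[x]^n$, the monomial $\mathbf{y}^{\mathbf{u}}$ is $y_1^{u_1}\cdots y_n^{u_n}$. A $\sigma$-ideal is an ideal $I$ with $\sigma(I)\subseteq I$; it is well-mixed if $ab\in I$ implies $a\sigma(b)\in I$ for all $a,b\in R$. For $F\subseteq R$, $\langle F\rangle$ denotes the smallest well-mixed $\sigma$-ideal containing $F$. *)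

theory Defs
  imports "HOL-Library.Poly_Mapping" "HOL-Computational_Algebra.Polynomial"
begin

text \<open>The difference polynomial ring k{y_i : i in 'n} is modelled as the polynomial
ring over k in the variables sigma^j(y_i), indexed by pairs (i,j) :: 'n \<times> nat.\<close>

type_synonym ('n, 'k) dpoly = "(('n \<times> nat) \<Rightarrow>\<^sub>0 nat) \<Rightarrow>\<^sub>0 'k"

definition ring_endo :: "('k::field \<Rightarrow> 'k) \<Rightarrow> bool" where
  "ring_endo \<sigma> \<longleftrightarrow> (\<forall>a b. \<sigma> (a + b) = \<sigma> a + \<sigma> b) \<and> (\<forall>a b. \<sigma> (a * b) = \<sigma> a * \<sigma> b) \<and> \<sigma> 1 = 1"

definition shift_mon :: "(('n \<times> nat) \<Rightarrow>\<^sub>0 nat) \<Rightarrow> (('n \<times> nat) \<Rightarrow>\<^sub>0 nat)" where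
  "shift_mon m = (\<Sum>v\<in>Poly_Mapping.keys m. Poly_Mapping.single (fst v, Suc (snd v)) (Poly_Mapping.lookup m v))"

definition sigmaR :: "('k::field \<Rightarrow> 'k) \<Rightarrow> ('n, 'k) dpoly \<Rightarrow> ('n, 'k) dpoly" where
  "sigmaR \<sigma> p = (\<Sum>m\<in>Poly_Mapping.keys p. Poly_Mapping.single (shift_mon m) (\<sigma> (Poly_Mapping.lookup p m)))"

definition yvar :: "'n \<Rightarrow> ('n, 'k::field) dpoly" where
  "yvar i = Poly_Mapping.single (Poly_Mapping.single (i, 0) 1) 1"

definition sym_pow :: "('k::field \<Rightarrow> 'k) \<Rightarrow> ('n, 'k) dpoly \<Rightarrow> nat poly \<Rightarrow> ('n, 'k) dpoly" where
  "sym_pow \<sigma> a p = (\<Prod>i\<le>degree p. ((sigmaR \<sigma> ^^ i) a) ^ coeff p i)"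

definition ymon :: "('k::field \<Rightarrow> 'k) \<Rightarrow> ('n::finite \<Rightarrow> nat poly) \<Rightarrow> ('n, 'k) dpoly" where
  "ymon \<sigma> u = (\<Prod>i\<in>UNIV. sym_pow \<sigma> (yvar i) (u i))"

definition is_monomial :: "('k::field \<Rightarrow> 'k) \<Rightarrow> ('n::finite, 'k) dpoly \<Rightarrow> bool" where
  "is_monomial \<sigma> a \<longleftrightarrow> (\<exists>u. a = ymon \<sigma> u)"

definition is_ideal :: "('a::comm_ring_1) set \<Rightarrow> bool" where
  "is_ideal I \<longleftrightarrow> 0 \<in> I \<and> (\<forall>a\<in>I. \<forall>b\<in>I. a + b \<in> I) \<and> (\<forall>a\<in>I. \<forall>r. r * a \<in> I)"

definition wm_sigma_ideal :: "('k::field \<Rightarrow> 'k) \<Rightarrow> ('n, 'k) dpoly set \<Rightarrow> bool" where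
  "wm_sigma_ideal \<sigma> I \<longleftrightarrow> is_ideal I \<and> (\<forall>a\<in>I. sigmaR \<sigma> a \<in> I)
     \<and> (\<forall>a b. a * b \<in> I \<longrightarrow> a * sigmaR \<sigma> b \<in> I)"

definition wm_closure :: "('k::field \<Rightarrow> 'k) \<Rightarrow> ('n, 'k) dpoly set \<Rightarrow> ('n, 'k) dpoly set" where
  "wm_closure \<sigma> F = \<Inter> {I. wm_sigma_ideal \<sigma> I \<and> F \<subseteq> I}"

end

theory Submission
  imports Defs "HOL-Library.Ramsey"
begin

section \<open>Almost-full relations\<close>

definition afull :: "'a set \<Rightarrow> ('a \<Rightarrow> 'a \<Rightarrow> bool) \<Rightarrow> bool" where
  "afull A R \<longleftrightarrow> (\<forall>f::nat \<Rightarrow> 'a. (\<forall>i. f i \<in> A) \<longrightarrow> (\<exists>i j. i < j \<and> R (f i) (f j)))"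

lemma afull_mono:
  assumes "afull A R" "\<And>x y. x \<in> A \<Longrightarrow> y \<in> A \<Longrightarrow> R x y \<Longrightarrow> Q x y"
  shows "afull A Q"
  using assms unfolding afull_def by blast

lemma afull_subset: "afull A R \<Longrightarrow> B \<subseteq> A \<Longrightarrow> afull B R"
  unfolding afull_def by blast

lemma afull_inv_image:
  assumes "afull UNIV R" shows "afull A (\<lambda>x y. R (g x) (g y))"
  unfolding afull_def
proof (intro allI impI)
  fix f :: "nat \<Rightarrow> 'b" assume "\<forall>i. f i \<in> A"
  from assms obtain i j where "i < j" "R (g (f i)) (g (f j))" unfolding afull_def
    by (erule_tac x="\<lambda>n. g (f n)" in allE) auto
  then show "\<exists>i j. i < j \<and> R (g (f i)) (g (f j))" by blast
qed

lemma afull_nat: "afull UNIV ((\<le>) :: nat \<Rightarrow> nat \<Rightarrow> bool)"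
  unfolding afull_def
proof (intro allI impI)
  fix f :: "nat \<Rightarrow> nat"
  define m where "m = (LEAST v. \<exists>i. f i = v)"
  have "\<exists>i. f i = m" unfolding m_def by (rule LeastI_ex) blast
  then obtain i where i: "f i = m" by blast
  have "m \<le> f (Suc i)" unfolding m_def by (rule Least_le) blast
  with i show "\<exists>i j. i < j \<and> f i \<le> f j" by (metis lessI)
qed

lemma afull_conj:
  assumes R: "afull A R" and Q: "afull A Q"
  shows "afull A (\<lambda>x y. R x y \<and> Q x y)"
  unfolding afull_def
proof (intro allI impI)
  fix f :: "nat \<Rightarrow> 'a" assume f: "\<forall>i. f i \<in> A"
  define c where "c = (\<lambda>X::nat set. if R (f (Min X)) (f (Max X)) then 1 else (0::nat))"
  have "\<exists>Y t. Y \<subseteq> UNIV \<and> infinite Y \<and> t < 2 \<and> (\<forall>x\<in>Y. \<forall>y\<in>Y. x \<noteq> y \<longrightarrow> c {x, y} = t)"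
    by (rule Ramsey2) (auto simp: c_def)
  then obtain Y t where Y: "infinite Y" and hom: "\<forall>x\<in>Y. \<forall>y\<in>Y. x \<noteq> y \<longrightarrow> c {x, y} = t"
    by blast
  define h where "h = enumerate Y"
  have hY: "h n \<in> Y" for n unfolding h_def using Y by (rule enumerate_in_set)
  have hm: "m < n \<Longrightarrow> h m < h n" for m n unfolding h_def using Y by (simp add: enumerate_mono)
  have cval: "m < n \<Longrightarrow> c {h m, h n} = (if R (f (h m)) (f (h n)) then 1 else 0)" for m n
    using hm[of m n] by (simp add: c_def min_def max_def)
  have fh: "\<forall>k. (f \<circ> h) k \<in> A" using f by simp
  have "(\<forall>k. (f \<circ> h) k \<in> A) \<longrightarrow> (\<exists>i j. i < j \<and> R ((f \<circ> h) i) ((f \<circ> h) j))"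
    using R unfolding afull_def by (rule spec)
  then have "\<exists>i j. i < j \<and> R ((f \<circ> h) i) ((f \<circ> h) j)" using fh by (rule mp)
  then obtain i j where ij: "i < j" "R (f (h i)) (f (h j))"
    unfolding comp_def by blast
  have "c {h i, h j} = t" using hom hY hm[OF ij(1)] by auto
  with cval[OF ij(1)] ij have t1: "t = 1" by simp
  have "(\<forall>k. (f \<circ> h) k \<in> A) \<longrightarrow> (\<exists>i j. i < j \<and> Q ((f \<circ> h) i) ((f \<circ> h) j))"
    using Q unfolding afull_def by (rule spec)
  then have "\<exists>i j. i < j \<and> Q ((f \<circ> h) i) ((f \<circ> h) j)" using fh by (rule mp)
  then obtain i' j' where ij': "i' < j'" "Q (f (h i')) (f (h j'))"
    unfolding comp_def by blast
  have "c {h i', h j'} = t" using hom hY hm[OF ij'(1)] by auto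
  with cval[OF ij'(1)] t1 have "R (f (h i')) (f (h j'))" by (cases "R (f (h i')) (f (h j'))") simp_all
  with ij' hm[OF ij'(1)] show "\<exists>i j. i < j \<and> R (f i) (f j) \<and> Q (f i) (f j)" by blast
qed

lemma afull_all_finite:
  assumes "finite C" "\<And>c. c \<in> C \<Longrightarrow> afull A (P c)"
  shows "afull A (\<lambda>x y. \<forall>c\<in>C. P c x y)"
  using assms
proof (induction C rule: finite_induct)
  case empty
  then show ?case unfolding afull_def by auto
next
  case (insert c C)
  have "afull A (\<lambda>x y. P c x y \<and> (\<forall>c\<in>C. P c x y))"
    by (rule afull_conj) (use insert in auto)
  then show ?case by (rule afull_mono) auto
qed

lemma afull_local:
  assumes "\<And>a. a \<in> A \<Longrightarrow> afull {b\<in>A. \<not> R a b} R"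
  shows "afull A R"
  unfolding afull_def
proof (intro allI impI)
  fix f :: "nat \<Rightarrow> 'a" assume f: "\<forall>i. f i \<in> A"
  show "\<exists>i j. i < j \<and> R (f i) (f j)"
  proof (cases "\<exists>j. 0 < j \<and> R (f 0) (f j)")
    case True then show ?thesis by blast
  next
    case False
    then have F: "\<forall>i. (\<lambda>n. f (Suc n)) i \<in> {b\<in>A. \<not> R (f 0) b}" using f by auto
    have H: "afull {b\<in>A. \<not> R (f 0) b} R" using assms f by blast
    have "(\<forall>i. (\<lambda>n. f (Suc n)) i \<in> {b\<in>A. \<not> R (f 0) b}) \<longrightarrow>
      (\<exists>i j. i < j \<and> R ((\<lambda>n. f (Suc n)) i) ((\<lambda>n. f (Suc n)) j))"
      using H unfolding afull_def by (rule spec)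
    then obtain i j where ij: "i < j" "R (f (Suc i)) (f (Suc j))"
      using F by auto
    show ?thesis
      by (rule exI[of _ "Suc i"], rule exI[of _ "Suc j"]) (use ij in simp)
  qed
qed

fun chain_seq :: "'a set \<Rightarrow> ('a \<Rightarrow> 'a \<Rightarrow> bool) \<Rightarrow> nat \<Rightarrow> 'a list" where
  "chain_seq S R 0 = []"
| "chain_seq S R (Suc n) = (SOME s. s \<in> S \<and> (\<forall>b\<in>set (chain_seq S R n). \<not> R b s)) # chain_seq S R n"

lemma afull_basis:
  assumes "afull A R" "S \<subseteq> A"
  shows "\<exists>B. finite B \<and> B \<subseteq> S \<and> (\<forall>s\<in>S. \<exists>b\<in>B. R b s)"
proof (rule ccontr)
  assume nt: "\<not> ?thesis"
  have H: "\<exists>s\<in>S. \<forall>b\<in>B. \<not> R b s" if fB: "finite B" and BS: "B \<subseteq> S" for B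
  proof (rule ccontr)
    assume "\<not> (\<exists>s\<in>S. \<forall>b\<in>B. \<not> R b s)"
    then have "\<forall>s\<in>S. \<exists>b\<in>B. R b s" by simp
    then have "\<exists>B. finite B \<and> B \<subseteq> S \<and> (\<forall>s\<in>S. \<exists>b\<in>B. R b s)"
      using fB BS by (intro exI[of _ B]) simp
    then show False using nt by (rule notE[rotated])
  qed
  define g where "g = chain_seq S R"
  define f where "f n = hd (g (Suc n))" for n
  have gS: "g (Suc n) = f n # g n" for n by (simp add: f_def g_def)
  have fsome: "f n = (SOME s. s \<in> S \<and> (\<forall>b\<in>set (g n). \<not> R b s))" for n
    by (simp add: f_def g_def)
  have step: "f n \<in> S \<and> (\<forall>b\<in>set (g n). \<not> R b (f n))" if "set (g n) \<subseteq> S" for n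
  proof -
    have "\<exists>s\<in>S. \<forall>b\<in>set (g n). \<not> R b s" using H[of "set (g n)"] that by blast
    then have ex: "\<exists>s. s \<in> S \<and> (\<forall>b\<in>set (g n). \<not> R b s)" by blast
    show ?thesis unfolding fsome by (rule someI_ex[OF ex])
  qed
  have *: "set (g n) \<subseteq> S \<and> set (g n) = f ` {..<n}" for n
  proof (induction n)
    case 0 then show ?case by (simp add: g_def)
  next
    case (Suc n)
    then have "f n \<in> S" using step by blast
    moreover have "set (g (Suc n)) = insert (f n) (set (g n))" by (simp add: gS)
    moreover have "f ` {..<Suc n} = insert (f n) (f ` {..<n})" by (simp add: lessThan_Suc)
    ultimately show ?case using Suc.IH by auto
  qed
  have fS: "f n \<in> S" for n using step *[of n] by blast
  have fnot: "\<forall>b\<in>set (g n). \<not> R b (f n)" for n using step *[of n] by blast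
  have "(\<forall>i. f i \<in> A) \<longrightarrow> (\<exists>i j. i < j \<and> R (f i) (f j))"
    using assms(1) unfolding afull_def by (rule spec)
  moreover have "\<forall>i. f i \<in> A" using fS assms(2) by blast
  ultimately obtain i j where ij: "i < j" "R (f i) (f j)" by blast
  have "f i \<in> set (g j)" using *[of j] ij(1) by auto
  then show False using fnot[of j] ij(2) by blast
qed

section \<open>Tail sums\<close>

definition Tl :: "nat poly \<Rightarrow> nat \<Rightarrow> nat" where
  "Tl p j = (\<Sum>i\<in>{j..degree p}. coeff p i)"

lemma Tl_bound:
  assumes "degree p \<le> N" shows "Tl p j = (\<Sum>i\<in>{j..N}. coeff p i)"
  unfolding Tl_def
  by (rule sum.mono_neutral_left) (use assms in \<open>auto intro: coeff_eq_0\<close>)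

lemma Tl_zero: "degree p < j \<Longrightarrow> Tl p j = 0"
  unfolding Tl_def by simp

lemma Tl_mono: "j \<le> k \<Longrightarrow> Tl p k \<le> Tl p j"
  unfolding Tl_def by (rule sum_mono2) auto

lemma Tl_Suc: "Tl p j = coeff p j + Tl p (Suc j)"
proof -
  define N where "N = max (degree p) j"
  have "Tl p j = (\<Sum>i\<in>{j..N}. coeff p i)" by (rule Tl_bound) (simp add: N_def)
  also have "\<dots> = coeff p j + (\<Sum>i\<in>{Suc j..N}. coeff p i)"
    by (rule sum.atLeast_Suc_atMost) (simp add: N_def)
  also have "(\<Sum>i\<in>{Suc j..N}. coeff p i) = Tl p (Suc j)" by (rule Tl_bound[symmetric]) (simp add: N_def)
  finally show ?thesis .
qed

lemma Tl_add_monom: "Tl (p + monom 1 k) j = Tl p j + (if j \<le> k then 1 else 0)"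
proof -
  define N where "N = max (degree p) k"
  have d: "degree (p + monom 1 k) \<le> N"
    by (rule degree_add_le) (auto simp: N_def intro: order.trans[OF degree_monom_le])
  have "Tl (p + monom 1 k) j = (\<Sum>i\<in>{j..N}. coeff p i + (if k = i then 1 else 0))"
    unfolding Tl_bound[OF d] by (rule sum.cong) (auto simp: coeff_monom)
  also have "\<dots> = Tl p j + (\<Sum>i\<in>{j..N}. (if k = i then 1 else 0))"
    by (simp add: sum.distrib Tl_bound[of p N] N_def)
  also have "(\<Sum>i\<in>{j..N}. (if k = i then 1 else (0::nat))) = (if j \<le> k then 1 else 0)"
    by (simp add: N_def)
  finally show ?thesis .
qed

lemma Tl_eq_imp_eq: "(\<And>j. Tl p j = Tl q j) \<Longrightarrow> p = q"
  by (rule poly_eqI) (metis Tl_Suc add_right_cancel)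

definition ple :: "nat poly \<Rightarrow> nat poly \<Rightarrow> bool" where
  "ple p q \<longleftrightarrow> (\<forall>j. Tl p j \<le> Tl q j)"

definition closedG :: "(nat poly \<Rightarrow> bool) \<Rightarrow> bool" where
  "closedG G \<longleftrightarrow> (\<forall>p k. G p \<longrightarrow> G (p + monom 1 k)) \<and>
     (\<forall>r k. G (r + monom 1 k) \<longrightarrow> G (r + monom 1 (Suc k)))"

lemma one_step:
  assumes cl: "closedG G" and Gp: "G p" and k: "Tl p k < Tl q k"
    and below: "\<And>i. i < k \<Longrightarrow> Tl q i \<le> Tl p i" and pq: "ple p q"
  shows "\<exists>p'. (\<forall>i. Tl p' i = Tl p i + (if i = k then 1 else 0)) \<and> G p'"
proof (cases k)
  case 0
  have "\<forall>i. Tl (p + monom 1 0) i = Tl p i + (if i = k then 1 else 0)"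
  proof
    fix i show "Tl (p + monom 1 0) i = Tl p i + (if i = k then 1 else 0)"
      unfolding Tl_add_monom using 0 by simp
  qed
  moreover have "G (p + monom 1 0)" using cl Gp unfolding closedG_def by blast
  ultimately show ?thesis by blast
next
  case (Suc k')
  have "Tl q k \<le> Tl q k'" by (rule Tl_mono) (simp add: Suc)
  moreover have "Tl q k' \<le> Tl p k'" using below Suc by simp
  moreover have "Tl p k' = coeff p k' + Tl p k" using Tl_Suc[of p k'] Suc by simp
  ultimately have pos: "coeff p k' > 0" using k by linarith
  define r where "r = p - monom 1 k'"
  have pr: "p = r + monom 1 k'"
    by (rule poly_eqI) (use pos in \<open>auto simp: r_def coeff_monom\<close>)
  show ?thesis
  proof (rule exI[of _ "r + monom 1 (Suc k')"], intro conjI allI)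
    fix i show "Tl (r + monom 1 (Suc k')) i = Tl p i + (if i = k then 1 else 0)"
      unfolding pr Tl_add_monom using Suc by auto
  next
    show "G (r + monom 1 (Suc k'))" using cl Gp pr unfolding closedG_def by auto
  qed
qed

lemma ple_closure:
  assumes cl: "closedG G"
  shows "ple p q \<Longrightarrow> G p \<Longrightarrow> G q"
proof -
  have "\<forall>p. (\<Sum>j\<le>degree q. Tl q j - Tl p j) = n \<longrightarrow> ple p q \<longrightarrow> G p \<longrightarrow> G q" for n
  proof (induction n rule: less_induct)
    case (less n)
    show ?case
    proof (intro allI impI)
      fix p assume n: "(\<Sum>j\<le>degree q. Tl q j - Tl p j) = n" and pq: "ple p q" and Gp: "G p"
      show "G q"
      proof (cases "\<forall>j\<le>degree q. Tl q j \<le> Tl p j")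
        case True
        have "Tl p j = Tl q j" for j
        proof (cases "j \<le> degree q")
          case True then show ?thesis using \<open>\<forall>j\<le>degree q. Tl q j \<le> Tl p j\<close> pq
            unfolding ple_def by (meson le_antisym)
        next
          case False then show ?thesis using pq Tl_zero[of q j] unfolding ple_def
            by (metis le_zero_eq not_le)
        qed
        then have "p = q" by (rule Tl_eq_imp_eq)
        then show ?thesis using Gp by simp
      next
        case False
        then obtain j where j: "j \<le> degree q" "Tl p j < Tl q j" by (auto simp: not_le)
        define k where "k = (LEAST j. Tl p j < Tl q j)"
        have k: "Tl p k < Tl q k" unfolding k_def by (rule LeastI[of _ j]) (use j in auto)
        have kj: "k \<le> j" unfolding k_def by (rule Least_le) (use j in auto)
        have below: "i < k \<Longrightarrow> Tl q i \<le> Tl p i" for i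
          using not_less_Least[of i "\<lambda>j. Tl p j < Tl q j"] unfolding k_def by simp
        obtain p' where p': "\<And>i. Tl p' i = Tl p i + (if i = k then 1 else 0)" and Gp': "G p'"
          using one_step[OF cl Gp k below pq] by blast
        have pq': "ple p' q" using pq k unfolding ple_def p' by auto
        have "(\<Sum>j\<le>degree q. Tl q j - Tl p' j) < (\<Sum>j\<le>degree q. Tl q j - Tl p j)"
        proof (rule sum_strict_mono_ex1)
          show "\<forall>x\<in>{..degree q}. Tl q x - Tl p' x \<le> Tl q x - Tl p x"
          proof
            fix x show "Tl q x - Tl p' x \<le> Tl q x - Tl p x"
              unfolding p' by (rule diff_le_mono2) simp
          qed
          have pk: "Tl p' k = Tl p k + 1" by (simp add: p')
          show "\<exists>a\<in>{..degree q}. Tl q a - Tl p' a < Tl q a - Tl p a"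
            using kj j k pk by (intro bexI[of _ k]) auto
        qed simp
        then show "G q" using less.IH n pq' Gp' by blast
      qed
    qed
  qed
  then show "ple p q \<Longrightarrow> G p \<Longrightarrow> G q" by blast
qed


definition LE :: "('n \<Rightarrow> nat poly) \<Rightarrow> ('n \<Rightarrow> nat poly) \<Rightarrow> bool" where
  "LE u w \<longleftrightarrow> (\<forall>i. ple (u i) (w i))"

lemma afull_ple: "afull UNIV ple"
proof (rule afull_local)
  fix p :: "nat poly"
  define d where "d = degree p"
  define M where "M = Tl p 0"
  define A where "A = {b\<in>UNIV. \<not> ple p b}"
  define e where "e l q = card {j. d \<le> j \<and> l \<le> Tl q j}" for l q
  have tail: "Tl q d < M" if "q \<in> A" for q
  proof -
    from that obtain j where j: "Tl q j < Tl p j" unfolding A_def ple_def by (auto simp: not_le)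
    have "j \<le> d"
    proof (rule ccontr)
      assume "\<not> j \<le> d" then have "Tl p j = 0" using Tl_zero[of p j] d_def by simp
      with j show False by simp
    qed
    then have "Tl q d \<le> Tl q j" by (rule Tl_mono)
    moreover have "Tl p j \<le> M" unfolding M_def by (rule Tl_mono) simp
    ultimately show ?thesis using j by linarith
  qed
  have R1: "afull A (\<lambda>x y. \<forall>c\<in>{..<d}. Tl x c \<le> Tl y c)"
    by (rule afull_all_finite) (auto intro: afull_inv_image[OF afull_nat])
  have R2: "afull A (\<lambda>x y. \<forall>c\<in>{1..<M}. e c x \<le> e c y)"
    by (rule afull_all_finite) (auto intro: afull_inv_image[OF afull_nat])
  have R: "afull A (\<lambda>x y. (\<forall>c\<in>{..<d}. Tl x c \<le> Tl y c) \<and> (\<forall>c\<in>{1..<M}. e c x \<le> e c y))"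
    by (rule afull_conj[OF R1 R2])
  show "afull {b\<in>UNIV. \<not> ple p b} ple"
    unfolding A_def[symmetric]
  proof (rule afull_mono[OF R])
    fix q q' assume qA: "q \<in> A" and q'A: "q' \<in> A"
      and c: "(\<forall>c\<in>{..<d}. Tl q c \<le> Tl q' c) \<and> (\<forall>c\<in>{1..<M}. e c q \<le> e c q')"
    show "ple q q'" unfolding ple_def
    proof
      fix j show "Tl q j \<le> Tl q' j"
      proof (cases "j < d")
        case True then show ?thesis using c by auto
      next
        case False
        then have dj: "d \<le> j" by simp
        define l where "l = Tl q j"
        show ?thesis
        proof (rule ccontr)
          assume "\<not> Tl q j \<le> Tl q' j"
          then have lt: "Tl q' j < l" unfolding l_def by simp
          have "l \<le> Tl q d" unfolding l_def by (rule Tl_mono[OF dj])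
          with tail[OF qA] have lM: "l < M" by simp
          have l1: "1 \<le> l" using lt by simp
          have "e l q \<le> e l q'" using c lM l1 by auto
          have fin: "finite {j. d \<le> j \<and> l \<le> Tl q j}"
          proof (rule finite_subset[of _ "{d..degree q}"])
            show "{j. d \<le> j \<and> l \<le> Tl q j} \<subseteq> {d..degree q}"
              using l1 Tl_zero[of q] by (force simp: not_le[symmetric])
          qed simp
          have "{d..j} \<subseteq> {j. d \<le> j \<and> l \<le> Tl q j}"
            unfolding l_def using Tl_mono[of _ j q] by auto
          then have "card {d..j} \<le> e l q" unfolding e_def by (rule card_mono[OF fin])
          then have c1: "Suc j - d \<le> e l q" by simp
          have "{j. d \<le> j \<and> l \<le> Tl q' j} \<subseteq> {d..<j}"
          proof
            fix i assume i: "i \<in> {j. d \<le> j \<and> l \<le> Tl q' j}"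
            show "i \<in> {d..<j}"
            proof (rule ccontr)
              assume "i \<notin> {d..<j}"
              then have "j \<le> i" using i by auto
              then have "Tl q' i \<le> Tl q' j" by (rule Tl_mono)
              with i lt show False by simp
            qed
          qed
          then have "e l q' \<le> card {d..<j}" unfolding e_def by (rule card_mono[rotated]) simp
          then have "e l q' \<le> j - d" by simp
          with c1 \<open>e l q \<le> e l q'\<close> dj show False by linarith
        qed
      qed
    qed
  qed
qed

lemma afull_LE: "afull UNIV (LE :: ('n::finite \<Rightarrow> nat poly) \<Rightarrow> _)"
proof -
  have "afull (UNIV :: ('n \<Rightarrow> nat poly) set) (\<lambda>u w. \<forall>c\<in>UNIV. ple (u c) (w c))"
  proof (rule afull_all_finite)
    fix c :: 'n
    show "afull UNIV (\<lambda>u w. ple (u c) (w c))"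
      using afull_inv_image[OF afull_ple, of UNIV "\<lambda>u. u c"] by simp
  qed simp
  then show ?thesis unfolding LE_def by simp
qed

lemma sym_pow_bound:
  "degree p \<le> N \<Longrightarrow> sym_pow \<sigma> a p = (\<Prod>i\<le>N. ((sigmaR \<sigma> ^^ i) a) ^ coeff p i)"
  unfolding sym_pow_def by (rule prod.mono_neutral_left) (auto simp: coeff_eq_0)

lemma sym_pow_add_monom:
  "sym_pow \<sigma> a (p + monom 1 k) = sym_pow \<sigma> a p * (sigmaR \<sigma> ^^ k) a"
proof -
  define N where "N = max (degree p) k"
  define f where "f i = (sigmaR \<sigma> ^^ i) a" for i
  have d: "degree (p + monom 1 k) \<le> N"
    by (rule degree_add_le) (auto simp: N_def intro: order.trans[OF degree_monom_le])
  have "sym_pow \<sigma> a (p + monom 1 k) = (\<Prod>i\<le>N. f i ^ coeff p i * (if k = i then f i else 1))"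
    unfolding sym_pow_bound[OF d] f_def by (rule prod.cong) (auto simp: coeff_monom)
  also have "\<dots> = (\<Prod>i\<le>N. f i ^ coeff p i) * (\<Prod>i\<le>N. (if k = i then f i else 1))"
    by (rule prod.distrib)
  also have "(\<Prod>i\<le>N. (if k = i then f i else 1)) = f k"
    by (simp add: N_def)
  also have "(\<Prod>i\<le>N. f i ^ coeff p i) = sym_pow \<sigma> a p"
    unfolding f_def by (rule sym_pow_bound[symmetric]) (simp add: N_def)
  finally show ?thesis unfolding f_def .
qed

lemma ymon_upd:
  "ymon \<sigma> (u(v := p)) = sym_pow \<sigma> (yvar v) p * (\<Prod>i\<in>UNIV-{v}. sym_pow \<sigma> (yvar i) (u i))"
  unfolding ymon_def
  by (subst prod.remove[of UNIV v]) (auto intro!: prod.cong)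

lemma mono_closure:
  assumes I: "wm_sigma_ideal \<sigma> I" and uw: "LE u w" and uI: "ymon \<sigma> u \<in> I"
  shows "ymon \<sigma> w \<in> I"
proof -
  have idl: "\<And>a r. a \<in> I \<Longrightarrow> r * a \<in> I" and wm: "\<And>a b. a * b \<in> I \<Longrightarrow> a * sigmaR \<sigma> b \<in> I"
    using I unfolding wm_sigma_ideal_def is_ideal_def by blast+
  have "finite C \<Longrightarrow> ymon \<sigma> (\<lambda>i. if i \<in> C then w i else u i) \<in> I" for C
  proof (induction C rule: finite_induct)
    case empty then show ?case using uI by simp
  next
    case (insert v C)
    define u' where "u' = (\<lambda>i. if i \<in> C then w i else u i)"
    define Rr where "Rr = (\<Prod>i\<in>UNIV-{v}. sym_pow \<sigma> (yvar i) (u' i))"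
    define s where "s k = (sigmaR \<sigma> ^^ k) (yvar v)" for k
    define G where "G p = (ymon \<sigma> (u'(v := p)) \<in> I)" for p
    have Geq: "ymon \<sigma> (u'(v := p)) = sym_pow \<sigma> (yvar v) p * Rr" for p
      unfolding Rr_def by (rule ymon_upd)
    have cl: "closedG G" unfolding closedG_def
    proof (intro conjI allI impI)
      fix p k assume "G p"
      then have 1: "s k * (sym_pow \<sigma> (yvar v) p * Rr) \<in> I" unfolding G_def Geq by (rule idl)
      have "sym_pow \<sigma> (yvar v) (p + monom 1 k) * Rr = s k * (sym_pow \<sigma> (yvar v) p * Rr)"
        unfolding sym_pow_add_monom s_def by (simp only: mult_ac)
      then show "G (p + monom 1 k)" unfolding G_def Geq using 1 by simp
    next
      fix r k assume "G (r + monom 1 k)"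
      moreover have "sym_pow \<sigma> (yvar v) (r + monom 1 k) * Rr = (sym_pow \<sigma> (yvar v) r * Rr) * s k"
        unfolding sym_pow_add_monom s_def by (simp only: mult_ac)
      ultimately have "(sym_pow \<sigma> (yvar v) r * Rr) * s k \<in> I" unfolding G_def Geq by simp
      then have 2: "(sym_pow \<sigma> (yvar v) r * Rr) * sigmaR \<sigma> (s k) \<in> I" by (rule wm)
      have "sigmaR \<sigma> (s k) = (sigmaR \<sigma> ^^ Suc k) (yvar v)" unfolding s_def by simp
      then have "sym_pow \<sigma> (yvar v) (r + monom 1 (Suc k)) * Rr = (sym_pow \<sigma> (yvar v) r * Rr) * sigmaR \<sigma> (s k)"
        unfolding sym_pow_add_monom by (simp only: mult_ac)
      then show "G (r + monom 1 (Suc k))" unfolding G_def Geq using 2 by simp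
    qed
    have "u' v = u v" using insert by (simp add: u'_def)
    have "G (u v)" unfolding G_def using insert.IH \<open>u' v = u v\<close>[symmetric]
      by (simp add: u'_def[symmetric])
    moreover have "ple (u v) (w v)" using uw unfolding LE_def by blast
    ultimately have "G (w v)" by (rule ple_closure[OF cl, rotated])
    moreover have "(\<lambda>i. if i \<in> insert v C then w i else u i) = u'(v := w v)"
      by (auto simp: u'_def)
    ultimately show ?case unfolding G_def by simp
  qed
  from this[of UNIV] show ?thesis by simp
qed

theorem theorem4p10:
  fixes \<sigma> :: "'k::field_char_0 \<Rightarrow> 'k"
    and S :: "('n::finite \<Rightarrow> nat poly) set"
  assumes "ring_endo \<sigma>"
  shows "\<exists>F. finite F \<and> (\<forall>f\<in>F. is_monomial \<sigma> f)
           \<and> wm_closure \<sigma> (ymon \<sigma> ` S) = wm_closure \<sigma> F"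
proof -
  obtain B where B: "finite B" "B \<subseteq> S" "\<forall>s\<in>S. \<exists>b\<in>B. LE b s"
    using afull_basis[OF afull_LE, of S] by blast
  have key: "ymon \<sigma> ` S \<subseteq> I" if "wm_sigma_ideal \<sigma> I" "ymon \<sigma> ` B \<subseteq> I" for I
  proof
    fix x assume "x \<in> ymon \<sigma> ` S"
    then obtain s where s: "s \<in> S" "x = ymon \<sigma> s" by blast
    with B obtain b where "b \<in> B" "LE b s" by blast
    with that s show "x \<in> I" using mono_closure[of \<sigma> I b s] by blast
  qed
  have "wm_closure \<sigma> (ymon \<sigma> ` S) = wm_closure \<sigma> (ymon \<sigma> ` B)"
    unfolding wm_closure_def
  proof (rule antisym)
    show "\<Inter> {I. wm_sigma_ideal \<sigma> I \<and> ymon \<sigma> ` S \<subseteq> I} \<subseteq> \<Inter> {I. wm_sigma_ideal \<sigma> I \<and> ymon \<sigma> ` B \<subseteq> I}"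
      using key by blast
    show "\<Inter> {I. wm_sigma_ideal \<sigma> I \<and> ymon \<sigma> ` B \<subseteq> I} \<subseteq> \<Inter> {I. wm_sigma_ideal \<sigma> I \<and> ymon \<sigma> ` S \<subseteq> I}"
      using B(2) by blast
  qed
  moreover have "\<forall>f\<in>ymon \<sigma> ` B. is_monomial \<sigma> f" unfolding is_monomial_def by blast
  ultimately show ?thesis using B(1) by blast
qed

end
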